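(* Let $G$ be the path graph on $n$ vertices $v_1,\dots,v_n$ (with $v_t$ adjacent to $v_{t+1}$ for $1\le t<n$; the linear nearest-neighbor architecture). The quantum hashing circuit produced by the construction in the context on $n$ qubits has CNOT cost $3n-5$ for one application and $3n\ell-7\ell+2$ for $\ell$ applications with the path strategy.
   Context: Each vertex carries one physical qubit; two-qubit gates only act on qubits at adjacent vertices. The shortest walk visiting all vertices used is $P=(v_1,\dots,v_n)$. $CR_y(\xi)=\mathrm{diag}(I,R_y(\xi))$; SWAP exchanges two qubits. Single application along a walk $(x_1,\dots,x_k)$: target starts on $x_2$; $U=\emptyset$; apply $CR_y$ (control $x_1$, target $x_2$), add $x_1$ to $U$, $j=2$; loop: if $x_{j+1}\notin U$ apply $CR_y$ (control $x_{j+1}$, target $x_j$) and add $x_{j+1}$ to $U$; if $j=k-1$ stop; else if $x_{j+2}=x_j$ set $j\leftarrow j+2$, otherwise apply SWAP to $x_j,x_{j+1}$ and set $j\leftarrow j+1$; repeat. Path strategy for $\ell$ applications: applications alternately use $P$ and its reversal; the last $CR_y$ of one application and the first $CR_y$ of the next act on the same pair and are merged into one $CR_y$. CNOT cost: each $CR_y$ counts 2, each SWAP 3, a $CR_y$ immediately followed by a SWAP on the same two qubits 3 in total, single-qubit gates 0. *)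

theory Defs
  imports Main
begin

text \<open>CRy c t is a controlled R_y rotation with
control qubit at vertex c and target at vertex t (the rotation angle does not
influence the CNOT cost and is not recorded).\<close>

datatype gate = CRy nat nat | SWAP nat nat

fun is_CRy :: "gate \<Rightarrow> bool" where
  "is_CRy (CRy _ _) = True"
| "is_CRy (SWAP _ _) = False"

fun cnot_cost :: "gate list \<Rightarrow> nat" where
  "cnot_cost [] = 0"
| "cnot_cost (CRy c t # SWAP a b # gs) =
     (if {c, t} = {a, b} then 3 + cnot_cost gs else 2 + cnot_cost (SWAP a b # gs))"
| "cnot_cost (CRy c t # gs) = 2 + cnot_cost gs"
| "cnot_cost (SWAP a b # gs) = 3 + cnot_cost gs"

text \<open>Walk (x_1,...,x_k) is the list xs with x_j = xs ! (j-1).  The loop state is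
the set U and the 0-based index i = j - 1 of the current target position; the
last argument is fuel (the loop advances i in every round, so fuel length xs
suffices).  The stopping test j = k - 1 is written i + 2 >= length xs.\<close>

fun app_loop :: "nat list \<Rightarrow> nat set \<Rightarrow> nat \<Rightarrow> nat \<Rightarrow> gate list" where
  "app_loop xs U i 0 = []"
| "app_loop xs U i (Suc f) =
     (let g1 = (if xs ! (i+1) \<notin> U then [CRy (xs ! (i+1)) (xs ! i)] else []);
          U' = U \<union> {xs ! (i+1)}
      in if length xs \<le> i + 2 then g1
         else if xs ! (i+2) = xs ! i then g1 @ app_loop xs U' (i+2) f
         else g1 @ [SWAP (xs ! i) (xs ! (i+1))] @ app_loop xs U' (i+1) f)"

definition single_app :: "nat list \<Rightarrow> gate list" where
  "single_app xs = CRy (xs ! 0) (xs ! 1) # app_loop xs {xs ! 0} 1 (length xs)"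

definition merge_cat :: "gate list \<Rightarrow> gate list \<Rightarrow> gate list" where
  "merge_cat A B =
     (if A \<noteq> [] \<and> B \<noteq> [] \<and> is_CRy (last A) \<and> last A = hd B
      then butlast A @ B else A @ B)"

definition path_strategy :: "nat list \<Rightarrow> nat \<Rightarrow> gate list" where
  "path_strategy P l =
     foldl merge_cat []
       (map (\<lambda>i. single_app (if even i then P else rev P)) [0..<l])"

definition path_adj :: "nat \<Rightarrow> nat \<Rightarrow> nat \<Rightarrow> bool" where
  "path_adj n a b \<longleftrightarrow> a \<in> {1..n} \<and> b \<in> {1..n} \<and> (b = a + 1 \<or> a = b + 1)"

definition is_walk :: "(nat \<Rightarrow> nat \<Rightarrow> bool) \<Rightarrow> nat set \<Rightarrow> nat list \<Rightarrow> bool" where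
  "is_walk E V xs \<longleftrightarrow> xs \<noteq> [] \<and> set xs \<subseteq> V \<and>
     (\<forall>i. i + 1 < length xs \<longrightarrow> E (xs ! i) (xs ! (i+1)))"

definition covering_walk :: "(nat \<Rightarrow> nat \<Rightarrow> bool) \<Rightarrow> nat set \<Rightarrow> nat list \<Rightarrow> bool" where
  "covering_walk E V xs \<longleftrightarrow> is_walk E V xs \<and> set xs = V"

definition shortest_covering_walk :: "(nat \<Rightarrow> nat \<Rightarrow> bool) \<Rightarrow> nat set \<Rightarrow> nat list \<Rightarrow> bool" where
  "shortest_covering_walk E V xs \<longleftrightarrow> covering_walk E V xs \<and>
     (\<forall>ys. covering_walk E V ys \<longrightarrow> length xs \<le> length ys)"

end

theory Submission
  imports Defs
begin

lemma cost_append: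
  "(B = [] \<or> is_CRy (hd B)) \<Longrightarrow> cnot_cost (A @ B) = cnot_cost A + cnot_cost B"
  apply (induction A rule: cnot_cost.induct)
      apply (auto simp: neq_Nil_conv elim!: is_CRy.elims)
  apply (case_tac B; auto)
  done

lemma loop_lemma:
  "distinct xs \<Longrightarrow> i + 2 \<le> length xs \<Longrightarrow> U \<subseteq> set (take (i+1) xs) \<Longrightarrow>
   length xs \<le> i + 1 + f \<Longrightarrow>
   (\<exists>rest. app_loop xs U i f = CRy (xs!(i+1)) (xs!i) # rest) \<and>
   last (app_loop xs U i f) = CRy (xs!(length xs - 1)) (xs!(length xs - 2)) \<and>
   cnot_cost (app_loop xs U i f) = 3*(length xs - i) - 4"
proof (induction f arbitrary: U i)
  case 0 then show ?case by simp
next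
  case (Suc f)
  have nU: "xs ! (i+1) \<notin> U"
  proof
    assume "xs ! (i+1) \<in> U"
    then have "xs ! (i+1) \<in> set (take (i+1) xs)" using Suc.prems(3) by blast
    then obtain j where "j < i+1" "xs ! j = xs ! (i+1)"
      using Suc.prems(2) by (auto simp: in_set_conv_nth)
    then show False using Suc.prems(1,2) nth_eq_iff_index_eq by fastforce
  qed
  show ?case
  proof (cases "length xs \<le> i + 2")
    case True
    then have "length xs = i + 2" using Suc.prems(2) by simp
    then show ?thesis using nU True by (simp add: Let_def)
  next
    case False
    have ne: "xs ! (i+2) \<noteq> xs ! i" using Suc.prems(1) False nth_eq_iff_index_eq by fastforce
    have U': "U \<union> {xs ! (i+1)} \<subseteq> set (take (i+1+1) xs)"
      using Suc.prems(3) False by (auto simp: take_Suc_conv_app_nth)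
    have IH: "(\<exists>rest. app_loop xs (U \<union> {xs ! (i+1)}) (i+1) f = CRy (xs!(i+1+1)) (xs!(i+1)) # rest) \<and>
   last (app_loop xs (U \<union> {xs ! (i+1)}) (i+1) f) = CRy (xs!(length xs - 1)) (xs!(length xs - 2)) \<and>
   cnot_cost (app_loop xs (U \<union> {xs ! (i+1)}) (i+1) f) = 3*(length xs - (i+1)) - 4"
      using Suc.IH[OF Suc.prems(1) _ U'] False Suc.prems(4) by simp
    then obtain rest where r: "app_loop xs (U \<union> {xs ! (i+1)}) (i+1) f = CRy (xs!(i+2)) (xs!(i+1)) # rest"
      by auto
    have eq: "app_loop xs U i (Suc f) = CRy (xs ! (i+1)) (xs ! i) # SWAP (xs ! i) (xs ! (i+1)) #
        app_loop xs (U \<union> {xs ! (i+1)}) (i+1) f"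
      using nU False ne by (simp add: Let_def)
    have c: "cnot_cost (app_loop xs U i (Suc f)) = 3 + cnot_cost (app_loop xs (U \<union> {xs ! (i+1)}) (i+1) f)"
      unfolding eq by (simp add: insert_commute)
    show ?thesis using IH c eq r False by auto
  qed
qed

lemma single_lemma:
  assumes "distinct xs" "3 \<le> length xs"
  shows "(\<exists>rest. single_app xs = CRy (xs!0) (xs!1) # rest) \<and>
   last (single_app xs) = CRy (xs!(length xs - 1)) (xs!(length xs - 2)) \<and>
   cnot_cost (single_app xs) = 3 * length xs - 5"
proof -
  have U: "{xs ! 0} \<subseteq> set (take (1+1) xs)" using assms(2)
    by (cases xs) auto
  note L = loop_lemma[OF assms(1) _ U, of "length xs"]
  from L assms(2) have "\<exists>c t rest. app_loop xs {xs ! 0} 1 (length xs) = CRy c t # rest"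
    by auto
  then obtain c t rest where r: "app_loop xs {xs ! 0} 1 (length xs) = CRy c t # rest"
    by auto
  show ?thesis using L assms(2) r unfolding single_app_def by auto
qed

lemma single_hd_last:
  assumes "distinct xs" "3 \<le> length xs"
  shows "single_app xs \<noteq> [] \<and> hd (single_app xs) = CRy (xs!0) (xs!1) \<and>
         last (single_app xs) = CRy (xs!(length xs - 1)) (xs!(length xs - 2)) \<and>
         cnot_cost (single_app xs) = 3 * length xs - 5"
  using single_lemma[OF assms] by auto

lemma rev_match:
  assumes "distinct xs" "3 \<le> length xs"
  shows "last (single_app (rev xs)) = hd (single_app xs)"
proof -
  have "last (single_app (rev xs)) = CRy (rev xs!(length xs - 1)) (rev xs!(length xs - 2))"
    using single_hd_last[of "rev xs"] assms by simp
  also have "\<dots> = CRy (xs!0) (xs!1)" using assms(2) by (simp add: rev_nth)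
  finally show ?thesis using single_hd_last[OF assms] by simp
qed

theorem lemma5:
  fixes n :: nat and P :: "nat list"
  assumes "n \<ge> 3"
    and "shortest_covering_walk (path_adj n) {1..n} P"
  shows "int (cnot_cost (single_app P)) = 3 * int n - 5 \<and>
         (\<forall>l::nat. l \<ge> 1 \<longrightarrow>
            int (cnot_cost (path_strategy P l)) = 3 * int n * int l - 7 * int l + 2)"
proof -
  have cw: "covering_walk (path_adj n) {1..n} [1..<n+1]"
    using assms(1) unfolding covering_walk_def is_walk_def path_adj_def by (auto simp del: upt_Suc simp: nth_upt)
  have setP: "set P = {1..n}" and le0: "length P \<le> length [1..<n+1]"
    using assms(2) cw unfolding shortest_covering_walk_def by (auto simp: covering_walk_def simp del: upt_Suc)
  have le: "length P \<le> n" using le0 by (simp del: upt_Suc)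
  have "card (set P) = n" using setP by simp
  then have lenP: "length P = n" using le card_length[of P] by simp
  then have dP: "distinct P" using card_distinct \<open>card (set P) = n\<close> by metis
  define Q where "Q = (\<lambda>i::nat. if even i then P else rev P)"
  have dQ: "distinct (Q i)" "length (Q i) = n" for i using dP lenP by (auto simp: Q_def)
  have SQ: "single_app (Q i) \<noteq> [] \<and> is_CRy (hd (single_app (Q i))) \<and>
      cnot_cost (single_app (Q i)) = 3 * n - 5" for i
    using single_hd_last[OF dQ(1)[of i]] dQ(2)[of i] assms(1) by simp
  have match: "last (single_app (Q l)) = hd (single_app (Q (Suc l)))" for l
    using rev_match[OF dP] rev_match[of "rev P"] dP lenP assms(1) by (auto simp: Q_def)
  define S where "S l = foldl merge_cat [] (map (\<lambda>i. single_app (Q i)) [0..<l])" for l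
  have Sstep: "S (Suc l) = merge_cat (S l) (single_app (Q l))" for l by (simp add: S_def)
  have main: "S l \<noteq> [] \<and> last (S l) = last (single_app (Q (l - 1))) \<and>
       cnot_cost (S l) + 2 * l = l * (3 * n - 5) + 2" if "l \<ge> 1" for l
    using that
  proof (induction l rule: dec_induct)
    case base
    then show ?case using SQ[of 0] by (simp add: S_def merge_cat_def)
  next
    case (step l)
    obtain l' where l': "l = Suc l'" using step.hyps by (cases l) auto
    have lastS: "last (S l) = hd (single_app (Q l))" using step.IH match[of l'] l' by simp
    have m: "S (Suc l) = butlast (S l) @ single_app (Q l)"
      using Sstep[of l] step.IH SQ[of l] lastS unfolding merge_cat_def by simp
    have c1: "cnot_cost (S l) = cnot_cost (butlast (S l)) + 2"
    proof -
      have "S l = butlast (S l) @ [last (S l)]" using step.IH by (metis append_butlast_last_id)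
      then have "cnot_cost (S l) = cnot_cost (butlast (S l)) + cnot_cost [last (S l)]"
        using cost_append[of "[last (S l)]" "butlast (S l)"] lastS SQ[of l] by simp
      moreover obtain c t where "last (S l) = CRy c t" using lastS SQ[of l]
        by (cases "hd (single_app (Q l))") auto
      ultimately show ?thesis by simp
    qed
    have c2: "cnot_cost (S (Suc l)) = cnot_cost (butlast (S l)) + (3*n-5)"
      using m cost_append[of "single_app (Q l)" "butlast (S l)"] SQ[of l] by simp
    define k where "k = 3 * n - 5"
    have i: "cnot_cost (S l) + 2 * l = l * k + 2" using step.IH k_def by simp
    have c2': "cnot_cost (S (Suc l)) = cnot_cost (butlast (S l)) + k" using c2 k_def by simp
    have "cnot_cost (S (Suc l)) + 2 * Suc l = Suc l * k + 2" using i c1 c2' by simp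
    then show ?case using m SQ[of l] k_def by simp
  qed
  have ps: "path_strategy P l = S l" for l unfolding path_strategy_def S_def Q_def by simp
  have A: "int (cnot_cost (single_app P)) = 3 * int n - 5"
    using SQ[of 0] assms(1) by (simp add: Q_def of_nat_diff)
  have B: "int (cnot_cost (path_strategy P l)) = 3 * int n * int l - 7 * int l + 2" if "l \<ge> 1" for l
  proof -
    have e: "cnot_cost (S l) + 2 * l = l * (3 * n - 5) + 2" using main[OF that] by simp
    have "int (cnot_cost (S l)) + 2 * int l = int l * (3 * int n - 5) + 2"
      using arg_cong[OF e, of int] assms(1) by (simp add: of_nat_diff)
    then show ?thesis unfolding ps by (simp add: algebra_simps)
  qed
  show ?thesis using A B by blast
qed

end
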